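(* There are $\mathfrak{c}$ many infinite subsets of $\omega$ which are pairwise almost oscillating.
   Context: Two sets $A, B \subseteq \omega$ are oscillating if for every two-element set $\{x, y\} \subseteq A$ and every two-element set $\{w, z\} \subseteq B$ we have $|y - x| \neq |z - w|$. They are almost oscillating if there is $n \in \omega$ such that $A \setminus n$ and $B \setminus n$ are oscillating (here $n = \{0, \dots, n-1\}$). $\mathfrak{c}$ denotes the cardinality of the continuum. *)

theory Defs
  imports Complex_Main "HOL-Library.Equipollence"
begin

definition oscillating :: "nat set \<Rightarrow> nat set \<Rightarrow> bool" where
  "oscillating A B \<longleftrightarrow>
     (\<forall>x\<in>A. \<forall>y\<in>A. \<forall>w\<in>B. \<forall>z\<in>B.
        x \<noteq> y \<longrightarrow> w \<noteq> z \<longrightarrow> \<bar>int y - int x\<bar> \<noteq> \<bar>int z - int w\<bar>)"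

definition almost_oscillating :: "nat set \<Rightarrow> nat set \<Rightarrow> bool" where
  "almost_oscillating A B \<longleftrightarrow> (\<exists>n. oscillating (A - {..<n}) (B - {..<n}))"

end

theory Submission
  imports Defs "HOL-Analysis.Analysis" "HOL-Library.Nat_Bijection"
begin

lemma pow2_diff_aux:
  fixes a b c d :: nat
  assumes ab: "a < b" and cd: "c < d" and ac: "a < c"
    and eq: "(2::int)^b - 2^a = 2^d - 2^c"
  shows False
proof -
  have "(2::int)^b = 2^a * 2^(b-a)" using ab by (simp flip: power_add)
  moreover have "(2::int)^d = 2^a * 2^(d-a)" using ac cd by (simp flip: power_add)
  moreover have "(2::int)^c = 2^a * 2^(c-a)" using ac by (simp flip: power_add)
  ultimately have "(2::int)^a * (2^(b-a) - 1) = 2^a * (2^(d-a) - 2^(c-a))"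
    using eq by (simp add: algebra_simps)
  hence e: "(2::int)^(b-a) - 1 = 2^(d-a) - 2^(c-a)" by simp
  have "even ((2::int)^(d-a) - 2^(c-a))" using ac cd by simp
  moreover have "odd ((2::int)^(b-a) - 1)" using ab by simp
  ultimately show False using e by simp
qed

lemma pow2_diff_min:
  fixes a b c d :: nat
  assumes "a \<noteq> b" "c \<noteq> d"
    and eq: "\<bar>(2::int)^b - 2^a\<bar> = \<bar>2^d - 2^c\<bar>"
  shows "min a b = min c d"
proof -
  have key: "a = c" if "a < b" "c < d" "(2::int)^b - 2^a = 2^d - 2^c" for a b c d :: nat
    using pow2_diff_aux[of a b c d] pow2_diff_aux[of c d a b] that
    by (metis linorder_neqE_nat)
  have mono: "(2::int)^x < 2^y" if "x < y" for x y :: nat using that by simp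
  show ?thesis
  proof (cases "a < b")
    case True
    then show ?thesis
    proof (cases "c < d")
      case True
      with \<open>a < b\<close> eq show ?thesis using mono[of a b] mono[of c d] key[of a b c d] by simp
    next
      case False
      hence "d < c" using assms by simp
      with \<open>a < b\<close> eq show ?thesis using mono[of a b] mono[of d c] key[of a b d c] by simp
    qed
  next
    case False
    hence "b < a" using assms by simp
    then show ?thesis
    proof (cases "c < d")
      case True
      with \<open>b < a\<close> eq show ?thesis using mono[of b a] mono[of c d] key[of b a c d] by simp
    next
      case False
      hence "d < c" using assms by simp
      with \<open>b < a\<close> eq show ?thesis using mono[of b a] mono[of d c] key[of b a d c] by simp
    qed
  qed
qed

definition kS :: "nat set \<Rightarrow> nat \<Rightarrow> nat" where
  "kS S n = prod_encode (n, set_encode (S \<inter> {..<n}))"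

definition G :: "nat set \<Rightarrow> nat set" where
  "G S = (\<lambda>n. 2 ^ kS S n) ` UNIV"

lemma kS_eq: "kS S n = kS T m \<Longrightarrow> n = m \<and> S \<inter> {..<n} = T \<inter> {..<n}"
  unfolding kS_def by (auto simp: set_encode_eq)

lemma G_inj: "inj G"
proof (rule injI)
  fix S T assume h: "G S = G T"
  have "S \<inter> {..<n} = T \<inter> {..<n}" for n
  proof -
    have "2 ^ kS S n \<in> G T" using h unfolding G_def by blast
    then obtain m where "(2::nat) ^ kS S n = 2 ^ kS T m" unfolding G_def by blast
    hence "kS S n = kS T m" by simp
    thus ?thesis using kS_eq by blast
  qed
  thus "S = T"
    by (metis Int_iff lessI lessThan_iff subsetI subset_antisym)
qed

lemma G_infinite: "infinite (G S)"
proof -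
  have "inj (\<lambda>n. (2::nat) ^ kS S n)"
    by (rule injI) (use kS_eq in auto)
  thus ?thesis unfolding G_def by (simp add: finite_image_iff)
qed

lemma G_ao:
  assumes "S \<noteq> T"
  shows "almost_oscillating (G S) (G T)"
proof -
  obtain m where m: "m \<in> S \<longleftrightarrow> m \<notin> T" using assms by blast
  define N where "N = Suc (Max ((\<lambda>n. (2::nat) ^ kS S n) ` {..m}))"
  have small: "(2::nat) ^ kS S n < N" if "n \<le> m" for n
    unfolding N_def using that by (simp add: le_imp_less_Suc)
  have common: "n \<le> m" if "kS S n = kS T n'" for n n'
  proof (rule ccontr)
    assume "\<not> n \<le> m"
    hence "m < n" by simp
    from kS_eq[OF that] have "S \<inter> {..<n} = T \<inter> {..<n}" by blast
    with \<open>m < n\<close> m show False by blast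
  qed
  have "oscillating (G S - {..<N}) (G T - {..<N})"
    unfolding oscillating_def
  proof (intro ballI impI)
    fix x y w z assume x: "x \<in> G S - {..<N}" and y: "y \<in> G S - {..<N}"
      and w: "w \<in> G T - {..<N}" and z: "z \<in> G T - {..<N}" and "x \<noteq> y" "w \<noteq> z"
    from x obtain a where a: "x = 2 ^ kS S a" "N \<le> x" unfolding G_def by auto
    from y obtain b where b: "y = 2 ^ kS S b" "N \<le> y" unfolding G_def by auto
    from w obtain c where c: "w = 2 ^ kS T c" unfolding G_def by auto
    from z obtain d where d: "z = 2 ^ kS T d" unfolding G_def by auto
    show "\<bar>int y - int x\<bar> \<noteq> \<bar>int z - int w\<bar>"
    proof
      assume eq: "\<bar>int y - int x\<bar> = \<bar>int z - int w\<bar>"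
      have ne1: "kS S a \<noteq> kS S b" using \<open>x \<noteq> y\<close> a b by auto
      have ne2: "kS T c \<noteq> kS T d" using \<open>w \<noteq> z\<close> c d by auto
      have "\<bar>(2::int)^(kS S b) - 2^(kS S a)\<bar> = \<bar>2^(kS T d) - 2^(kS T c)\<bar>"
        using eq a b c d by simp
      from pow2_diff_min[OF ne1 ne2 this]
      have mm: "min (kS S a) (kS S b) = min (kS T c) (kS T d)" .
      show False
      proof (cases "kS S a \<le> kS S b")
        case True
        hence e: "kS S a = kS T c \<or> kS S a = kS T d" using mm by (metis min_def)
        then obtain n' where "kS S a = kS T n'" by blast
        hence "a \<le> m" by (rule common)
        with small a show False by fastforce
      next
        case False
        hence e: "kS S b = kS T c \<or> kS S b = kS T d" using mm by (metis min_def)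
        then obtain n' where "kS S b = kS T n'" by blast
        hence "b \<le> m" by (rule common)
        with small b show False by fastforce
      qed
    qed
  qed
  thus ?thesis unfolding almost_oscillating_def by blast
qed

theorem proposition10:
  shows "\<exists>F :: nat set set. F \<approx> (UNIV :: real set) \<and> (\<forall>A\<in>F. infinite A) \<and>
           pairwise almost_oscillating F"
proof (intro exI conjI)
  show "range G \<approx> (UNIV :: real set)"
    using inj_on_image_eqpoll_self[OF G_inj] nat_sets_eqpoll_reals eqpoll_trans by blast
  show "\<forall>A\<in>range G. infinite A" using G_infinite by blast
  show "pairwise almost_oscillating (range G)"
    unfolding pairwise_def using G_ao by (metis imageE)
qed

end
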